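(* Let $F$ be a minimally unsatisfiable clause-set. Then every maximal singular tuple $(v_1,\dots,v_m)$ for $F$ has length $m = \mathrm{singind}(F)$; that is, all maximal singular tuples for $F$ have the same length.
   Context: Literals are variables $v$ and complements $\overline{v}$; a clause is a finite set of literals with no complementary pair; a clause-set is a finite set of clauses; $\mathrm{var}(F)$ is the set of variables occurring in $F$; $\mathrm{ldeg}_F(x)$ is the number of clauses of $F$ containing literal $x$. DP-reduction: $\mathrm{DP}_v(F) := \{C \in F : v \notin \mathrm{var}(C)\} \cup \{(C \cup D)\setminus\{v,\overline{v}\} : C, D \in F,\ C \cap \overline{D} = \{v\}\}$, and $\mathrm{DP}_{v_1,\dots,v_n}(F)$ denotes applying $\mathrm{DP}_{v_1}$, then $\mathrm{DP}_{v_2}$, ..., then $\mathrm{DP}_{v_n}$ (for $n=0$ it is $F$). $\mathrm{MU}$ is the set of minimally unsatisfiable clause-sets. A variable $v$ is singular for $F$ if $\min(\mathrm{ldeg}_F(v),\mathrm{ldeg}_F(\overline{v}))=1$; $F$ is nonsingular if it has no singular variables. For $F\in\mathrm{MU}$, a tuple $(v_1,\dots,v_n)$ of variables ($n\ge 0$) is a singular tuple for $F$ if for every $i$, $v_i$ is singular for $\mathrm{DP}_{v_1,\dots,v_{i-1}}(F)$; it is maximal if $\mathrm{DP}_{v_1,\dots,v_n}(F)$ is nonsingular. The singularity index $\mathrm{singind}(F)$ is the minimal $n$ such that a maximal singular tuple of length $n$ exists for $F$. *)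

theory Defs
  imports Main
begin

datatype 'v lit = Pos 'v | Neg 'v

fun comp :: "'v lit \<Rightarrow> 'v lit" where
  "comp (Pos v) = Neg v"
| "comp (Neg v) = Pos v"

fun var_of :: "'v lit \<Rightarrow> 'v" where
  "var_of (Pos v) = v"
| "var_of (Neg v) = v"

type_synonym 'v clause = "'v lit set"
type_synonym 'v cls = "'v clause set"

definition comp_set :: "'v clause \<Rightarrow> 'v clause" where
  "comp_set C = comp ` C"

definition is_clause :: "'v clause \<Rightarrow> bool" where
  "is_clause C \<longleftrightarrow> finite C \<and> C \<inter> comp_set C = {}"

definition is_clause_set :: "'v cls \<Rightarrow> bool" where
  "is_clause_set F \<longleftrightarrow> finite F \<and> (\<forall>C\<in>F. is_clause C)"

definition vars :: "'v cls \<Rightarrow> 'v set" where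
  "vars F = (\<Union>C\<in>F. var_of ` C)"

definition ldeg :: "'v cls \<Rightarrow> 'v lit \<Rightarrow> nat" where
  "ldeg F x = card {C \<in> F. x \<in> C}"

fun lit_val :: "('v \<Rightarrow> bool) \<Rightarrow> 'v lit \<Rightarrow> bool" where
  "lit_val \<phi> (Pos v) = \<phi> v"
| "lit_val \<phi> (Neg v) = (\<not> \<phi> v)"

definition satisfiable :: "'v cls \<Rightarrow> bool" where
  "satisfiable F \<longleftrightarrow> (\<exists>\<phi>. \<forall>C\<in>F. \<exists>x\<in>C. lit_val \<phi> x)"

definition MU :: "'v cls set" where
  "MU = {F. is_clause_set F \<and> \<not> satisfiable F \<and> (\<forall>C\<in>F. satisfiable (F - {C}))}"

definition DP :: "'v \<Rightarrow> 'v cls \<Rightarrow> 'v cls" where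
  "DP v F = {C \<in> F. v \<notin> var_of ` C}
     \<union> {(C \<union> D) - {Pos v, Neg v} | C D. C \<in> F \<and> D \<in> F \<and> C \<inter> comp_set D = {Pos v}}"

definition DPs :: "'v list \<Rightarrow> 'v cls \<Rightarrow> 'v cls" where
  "DPs vs F = foldl (\<lambda>G v. DP v G) F vs"

definition singular :: "'v cls \<Rightarrow> 'v \<Rightarrow> bool" where
  "singular F v \<longleftrightarrow> min (ldeg F (Pos v)) (ldeg F (Neg v)) = 1"

definition nonsingular :: "'v cls \<Rightarrow> bool" where
  "nonsingular F \<longleftrightarrow> (\<forall>v. \<not> singular F v)"

definition singular_tuple :: "'v cls \<Rightarrow> 'v list \<Rightarrow> bool" where
  "singular_tuple F vs \<longleftrightarrow> (\<forall>i < length vs. singular (DPs (take i vs) F) (vs ! i))"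

definition maximal_singular_tuple :: "'v cls \<Rightarrow> 'v list \<Rightarrow> bool" where
  "maximal_singular_tuple F vs \<longleftrightarrow> singular_tuple F vs \<and> nonsingular (DPs vs F)"

definition singind :: "'v cls \<Rightarrow> nat" where
  "singind F = (LEAST n. \<exists>vs. maximal_singular_tuple F vs \<and> length vs = n)"

end

theory Submission
  imports Defs
begin

lemma comp_comp[simp]: "comp (comp x) = x" by (cases x) auto
lemma comp_neq[simp]: "comp x \<noteq> x" by (cases x) auto
lemma comp_neq2[simp]: "x \<noteq> comp x" by (cases x) auto
lemma var_comp[simp]: "var_of (comp x) = var_of x" by (cases x) auto
lemma comp_inj[simp]: "comp x = comp y \<longleftrightarrow> x = y" by (metis comp_comp)
lemma lit_val_comp[simp]: "lit_val \<phi> (comp x) = (\<not> lit_val \<phi> x)" by (cases x) auto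
lemma var_eq: "var_of l = var_of x \<Longrightarrow> l = x \<or> l = comp x"
  by (cases l; cases x) auto
lemma var_pos_neg: "var_of l = v \<longleftrightarrow> l = Pos v \<or> l = Neg v" by (cases l) auto

definition assign :: "('v \<Rightarrow> bool) \<Rightarrow> 'v lit \<Rightarrow> ('v \<Rightarrow> bool)" where
  "assign \<phi> z = \<phi>(var_of z := (z = Pos (var_of z)))"

lemma lit_val_assign: "lit_val (assign \<phi> z) l = (if var_of l = var_of z then l = z else lit_val \<phi> l)"
  by (cases l; cases z) (auto simp: assign_def)

lemma clause_no_comp: "is_clause C \<Longrightarrow> l \<in> C \<Longrightarrow> comp l \<notin> C"
  unfolding is_clause_def comp_set_def by auto

lemma MU_finite: "G \<in> MU \<Longrightarrow> finite G" by (simp add: MU_def is_clause_set_def)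
lemma MU_cl: "G \<in> MU \<Longrightarrow> K \<in> G \<Longrightarrow> is_clause K" by (simp add: MU_def is_clause_set_def)

lemma MU_model_minus: assumes "G \<in> MU" "D \<in> G"
  obtains \<phi> where "\<forall>K\<in>G - {D}. \<exists>l\<in>K. lit_val \<phi> l" "\<forall>l\<in>D. \<not> lit_val \<phi> l"
proof -
  from assms obtain \<phi> where h: "\<forall>K\<in>G - {D}. \<exists>l\<in>K. lit_val \<phi> l"
    by (auto simp: MU_def satisfiable_def)
  have "\<forall>l\<in>D. \<not> lit_val \<phi> l"
  proof (rule ccontr)
    assume "\<not> ?thesis"
    then have "\<forall>K\<in>G. \<exists>l\<in>K. lit_val \<phi> l" using h by blast
    then have "satisfiable G" unfolding satisfiable_def by blast
    with assms show False by (simp add: MU_def)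
  qed
  with h that show ?thesis by blast
qed

lemma ldeg_ge1: "finite G \<Longrightarrow> ldeg G z \<ge> 1 \<longleftrightarrow> (\<exists>K\<in>G. z \<in> K)"
  unfolding ldeg_def by (auto simp: Suc_le_eq card_gt_0_iff)

lemma ldeg_one: "ldeg G z = 1 \<Longrightarrow> \<exists>C. {K\<in>G. z\<in>K} = {C}"
  unfolding ldeg_def by (simp add: card_1_singleton_iff)

lemma MU_both: assumes "G \<in> MU" "K0 \<in> G" "z \<in> K0" shows "\<exists>K\<in>G. comp z \<in> K"
proof (rule ccontr)
  assume nc: "\<not> ?thesis"
  from MU_model_minus[OF assms(1,2)] obtain \<phi> where h: "\<forall>K\<in>G-{K0}. \<exists>l\<in>K. lit_val \<phi> l" by blast
  have "satisfiable G" unfolding satisfiable_def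
  proof (intro exI ballI)
    fix K assume KG: "K \<in> G"
    show "\<exists>l\<in>K. lit_val (assign \<phi> z) l"
    proof (cases "z \<in> K")
      case True then show ?thesis by (auto simp: lit_val_assign intro!: bexI[of _ z])
    next
      case False
      with KG have "K \<noteq> K0" using assms by auto
      with h KG obtain l where l: "l\<in>K" "lit_val \<phi> l" by auto
      moreover have "var_of l \<noteq> var_of z" using var_eq[of l z] False nc KG l by auto
      ultimately show ?thesis by (auto simp: lit_val_assign)
    qed
  qed
  with assms show False by (simp add: MU_def)
qed

lemma MU_ldeg_comp: "G \<in> MU \<Longrightarrow> ldeg G z \<ge> 1 \<Longrightarrow> ldeg G (comp z) \<ge> 1"
  using MU_both ldeg_ge1 MU_finite by metis

lemma singular_iff: "singular G v \<longleftrightarrow> (\<exists>z. var_of z = v \<and> ldeg G z = 1 \<and> ldeg G (comp z) \<ge> 1)"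
  unfolding singular_def
  apply (rule iffI)
   apply (cases "ldeg G (Pos v) \<le> ldeg G (Neg v)")
    apply (rule exI[of _ "Pos v"]; simp add: min_def)
   apply (rule exI[of _ "Neg v"]; simp add: min_def)
  apply clarify
  subgoal for z by (cases z) (auto simp: min_def)
  done


lemma DP_keep: "K \<in> G \<Longrightarrow> v \<notin> var_of ` K \<Longrightarrow> K \<in> DP v G"
  unfolding DP_def by blast
lemma DP_res: "C1 \<in> G \<Longrightarrow> D1 \<in> G \<Longrightarrow> C1 \<inter> comp_set D1 = {Pos v} \<Longrightarrow> K = (C1 \<union> D1) - {Pos v, Neg v} \<Longrightarrow> K \<in> DP v G"
  unfolding DP_def by blast
lemma DP_E: assumes "K \<in> DP v G"
  obtains "K \<in> G" "v \<notin> var_of ` K"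
  | C1 D1 where "K = (C1 \<union> D1) - {Pos v, Neg v}" "C1 \<in> G" "D1 \<in> G" "C1 \<inter> comp_set D1 = {Pos v}"
  using assms unfolding DP_def by blast


lemma is_clause_iff: "is_clause K \<longleftrightarrow> finite K \<and> (\<forall>l\<in>K. comp l \<notin> K)"
  unfolding is_clause_def comp_set_def by (rule conj_cong[OF refl]) blast

lemma card_ldeg_mono: "finite G \<Longrightarrow> ldeg G z = card {K\<in>G. z \<in> K}" by (simp add: ldeg_def)



definition fA :: "'v clause \<Rightarrow> 'v lit \<Rightarrow> 'v clause \<Rightarrow> 'v clause" where
  "fA C x K = (if comp x \<in> K then (C - {x}) \<union> (K - {comp x}) else K)"

locale uniq =
  fixes G :: "'v cls" and C :: "'v clause" and x :: "'v lit"
  assumes MU: "G \<in> MU" and CG: "C \<in> G" and xC: "x \<in> C"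
    and uq: "\<And>K. K \<in> G \<Longrightarrow> x \<in> K \<Longrightarrow> K = C"
begin

abbreviation "A \<equiv> C - {x}"
abbreviation "f \<equiv> fA C x"
lemma f_def: "f K = (if comp x \<in> K then A \<union> (K - {comp x}) else K)" by (simp add: fA_def)

lemma cl: "K \<in> G \<Longrightarrow> is_clause K" using MU MU_cl by blast
lemma cx_notin_C: "comp x \<notin> C" using clause_no_comp cl CG xC by blast
lemma A_C: "A \<subseteq> C" by auto
lemma A_novar: "a \<in> A \<Longrightarrow> var_of a \<noteq> var_of x"
  using var_eq[of a x] cx_notin_C by auto
lemma x_notin_A: "x \<notin> A" "comp x \<notin> A" using A_novar by fastforce+

lemma flip: assumes h: "\<forall>K\<in>G. comp x \<notin> K \<longrightarrow> (\<exists>l\<in>K. lit_val \<phi> l)" and a: "a \<in> A" "lit_val \<phi> a"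
  shows False
proof -
  have "satisfiable G" unfolding satisfiable_def
  proof (intro exI ballI)
    fix K assume KG: "K \<in> G"
    show "\<exists>l\<in>K. lit_val (assign \<phi> (comp x)) l"
    proof (cases "comp x \<in> K")
      case True then show ?thesis by (auto simp: lit_val_assign intro!: bexI[of _ "comp x"])
    next
      case False
      with h KG obtain l where l: "l \<in> K" "lit_val \<phi> l" by blast
      show ?thesis
      proof (cases "var_of l = var_of x")
        case True
        then have "l = x" using var_eq[of l x] False l by auto
        then have "K = C" using uq KG l by auto
        then show ?thesis using a A_C A_novar[OF a(1)] by (auto simp: lit_val_assign)
      next
        case False then show ?thesis using l by (auto simp: lit_val_assign)
      qed
    qed
  qed
  with MU show False by (simp add: MU_def)
qed

lemma noclash: assumes "D \<in> G" "comp x \<in> D" "a \<in> A" "comp a \<in> D" shows False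
proof -
  obtain \<phi> where h: "\<forall>K\<in>G - {D}. \<exists>l\<in>K. lit_val \<phi> l" "\<forall>l\<in>D. \<not> lit_val \<phi> l"
    using MU_model_minus[OF MU assms(1)] by blast
  have "lit_val \<phi> a" using h(2) assms(4) by auto
  moreover have "\<forall>K\<in>G. comp x \<notin> K \<longrightarrow> (\<exists>l\<in>K. lit_val \<phi> l)" using h(1) assms(2) by blast
  ultimately show False using flip assms(3) by blast
qed

lemma f_aux: assumes "K1 \<in> G" "comp x \<in> K1" "K2 \<in> G" "K2 \<noteq> K1" "f K1 = f K2" shows False
proof -
  obtain \<phi> where h: "\<forall>K\<in>G - {K1}. \<exists>l\<in>K. lit_val \<phi> l" "\<forall>l\<in>K1. \<not> lit_val \<phi> l"
    using MU_model_minus[OF MU assms(1)] by blast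
  obtain l where l: "l \<in> K2" "lit_val \<phi> l" using h(1) assms(3,4) by blast
  have "l \<noteq> comp x" using h(2) assms(2) l by auto
  then have "l \<in> f K2" using l by (auto simp: f_def)
  then have "l \<in> A \<union> (K1 - {comp x})" using assms(2,5) by (simp add: f_def)
  then have "l \<in> A" using h(2) l by auto
  moreover have "\<forall>K\<in>G. comp x \<notin> K \<longrightarrow> (\<exists>l\<in>K. lit_val \<phi> l)" using h(1) assms(2) by blast
  ultimately show False using flip l by blast
qed

lemma f_inj: "inj_on f (G - {C})"
proof (rule inj_onI)
  fix K1 K2 assume k: "K1 \<in> G - {C}" "K2 \<in> G - {C}" "f K1 = f K2"
  show "K1 = K2"
  proof (rule ccontr)
    assume ne: "K1 \<noteq> K2"
    show False
    proof (cases "comp x \<in> K1")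
      case True then show ?thesis using f_aux[of K1 K2] k ne by auto
    next
      case F1: False
      show ?thesis
      proof (cases "comp x \<in> K2")
        case True then show ?thesis using f_aux[of K2 K1] k ne by auto
      next
        case False then show ?thesis using F1 k ne by (simp add: f_def)
      qed
    qed
  qed
qed

lemma CK: assumes "K \<in> G" "comp x \<in> K" shows "C \<inter> comp_set K = {x}"
proof -
  have "x \<in> comp_set K" using assms(2) unfolding comp_set_def by (metis comp_comp imageI)
  moreover have "a = x" if "a \<in> C" "a \<in> comp_set K" for a
  proof (rule ccontr)
    assume "a \<noteq> x"
    then have "a \<in> A" using that by simp
    moreover have "comp a \<in> K" using that(2) unfolding comp_set_def by auto
    ultimately show False using noclash assms by blast
  qed
  ultimately show ?thesis using xC by blast
qed

lemma KC: assumes "K \<in> G" "comp x \<in> K" shows "K \<inter> comp_set C = {comp x}"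
proof -
  have "comp x \<in> comp_set C" using xC unfolding comp_set_def by auto
  moreover have "b = comp x" if "b \<in> K" "b \<in> comp_set C" for b
  proof -
    note bb = that
    obtain a where a: "a \<in> C" "b = comp a" using bb(2) unfolding comp_set_def by auto
    have "comp b \<in> comp_set K" using bb(1) unfolding comp_set_def by auto
    then have "a \<in> C \<inter> comp_set K" using a by simp
    then have "a = x" using CK assms by blast
    then show ?thesis using a by simp
  qed
  ultimately show ?thesis using assms(2) by blast
qed

lemma K_novar: "K \<in> G \<Longrightarrow> K \<noteq> C \<Longrightarrow> comp x \<notin> K \<Longrightarrow> var_of x \<notin> var_of ` K"
  using var_eq uq by fastforce

lemma DP_eq: "DP (var_of x) G = f ` (G - {C})"
proof -
  define v where "v = var_of x"
  have xv: "x = Pos v \<or> x = Neg v" unfolding v_def by (cases x) auto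
  have pv: "{Pos v, Neg v} = {x, comp x}" using xv by auto
  show ?thesis
  proof (rule set_eqI, rule iffI)
    fix K assume "K \<in> DP (var_of x) G"
    then have "K \<in> DP v G" by (simp add: v_def)
    then show "K \<in> f ` (G - {C})"
    proof (cases rule: DP_E)
      case 1
      note a = 1
      have "x \<notin> K" using a(2) v_def by blast
      moreover have "comp x \<notin> K"
      proof
        assume "comp x \<in> K" then have "var_of (comp x) \<in> var_of ` K" by (rule imageI)
        with a(2) v_def show False by simp
      qed
      ultimately have "K \<noteq> C" "f K = K" using xC by (auto simp: f_def)
      then show ?thesis using a by (intro rev_image_eqI[of K]) auto
    next
      case (2 C1 D1)
      note b = 2
      have "Pos v \<in> C1 \<inter> comp_set D1" using b(4) by simp
      then have p1a: "Pos v \<in> C1" and p1b: "Pos v \<in> comp ` D1" by (auto simp: comp_set_def)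
      from p1b obtain d where dd: "d \<in> D1" "comp d = Pos v" by (metis imageE)
      have "d = Neg v" using dd(2) by (cases d) auto
      then have p1: "Pos v \<in> C1" "Neg v \<in> D1" using p1a dd(1) by auto
      have Kb: "K = (C1 \<union> D1) - {x, comp x}" using b(1) pv by simp
      show ?thesis
      proof (cases "x = Pos v")
        case True
        have "C1 = C" using uq[OF b(2)] p1(1) True by simp
        have cD: "comp x \<in> D1" using True p1 by simp
        have "D1 \<noteq> C" using cD cx_notin_C by blast
        have "x \<notin> D1" using clause_no_comp[OF cl[OF b(3)] cD] by simp
        have "K = f D1" unfolding Kb f_def using \<open>C1 = C\<close> cD \<open>x \<notin> D1\<close> cx_notin_C
          by auto
        then show ?thesis using b(3) \<open>D1 \<noteq> C\<close> by (intro rev_image_eqI[of D1]) auto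
      next
        case False
        then have xN: "x = Neg v" using xv by simp
        have "D1 = C" using uq[OF b(3)] p1(2) xN by simp
        have cD: "comp x \<in> C1" using xN p1 by simp
        have "C1 \<noteq> C" using cD cx_notin_C by blast
        have "x \<notin> C1" using clause_no_comp[OF cl[OF b(2)] cD] by simp
        have "K = f C1" unfolding Kb f_def using \<open>D1 = C\<close> cD \<open>x \<notin> C1\<close> cx_notin_C
          by auto
        then show ?thesis using b(2) \<open>C1 \<noteq> C\<close> by (intro rev_image_eqI[of C1]) auto
      qed
    qed
  next
    fix K assume "K \<in> f ` (G - {C})"
    then obtain K0 where K0: "K0 \<in> G" "K0 \<noteq> C" "K = f K0" by blast
    show "K \<in> DP (var_of x) G"
    proof (cases "comp x \<in> K0")
      case False
      then have "K = K0" using K0(3) by (simp add: f_def)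
      then show ?thesis using K_novar[OF K0(1,2) False] K0(1) by (simp add: DP_keep)
    next
      case True
      have x0: "x \<notin> K0" using clause_no_comp[OF cl[OF K0(1)] True] by simp
      have eq: "K = (C \<union> K0) - {Pos v, Neg v}" unfolding pv K0(3) f_def
        using True x0 cx_notin_C by auto
      show ?thesis
      proof (cases "x = Pos v")
        case xP: True
        have "C \<inter> comp_set K0 = {Pos v}" using CK[OF K0(1) True] xP by simp
        then show ?thesis unfolding v_def[symmetric] using DP_res[OF CG K0(1) _ eq] by blast
      next
        case False
        then have xN: "x = Neg v" using xv by simp
        have "K0 \<inter> comp_set C = {Pos v}" using KC[OF K0(1) True] xN by simp
        moreover have "K = (K0 \<union> C) - {Pos v, Neg v}" using eq by blast
        ultimately show ?thesis unfolding v_def[symmetric] using DP_res[OF K0(1) CG] by blast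
      qed
    qed
  qed
qed


abbreviation "G1 \<equiv> DP (var_of x) G"

lemma fin: "finite G" using MU MU_finite by blast

lemma f_clause: assumes "K \<in> G" shows "is_clause (f K)"
proof (cases "comp x \<in> K")
  case False then show ?thesis using cl[OF assms] by (simp add: f_def)
next
  case True
  have fC: "finite C" "finite K" using cl[OF CG] cl[OF assms] by (auto simp: is_clause_iff)
  have "comp l \<notin> f K" if l: "l \<in> f K" for l
  proof
    assume cl2: "comp l \<in> f K"
    have fk: "f K = A \<union> (K - {comp x})" using True by (simp add: f_def)
    consider (aa) "l \<in> A" "comp l \<in> A" | (ak) "l \<in> A" "comp l \<in> K" | (ka) "l \<in> K" "comp l \<in> A"
      | (kk) "l \<in> K" "comp l \<in> K" using l cl2 fk by auto
    then show False
    proof cases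
      case aa then show ?thesis using clause_no_comp[OF cl[OF CG]] A_C by blast
    next
      case ak then show ?thesis using noclash[OF assms True] by blast
    next
      case ka then show ?thesis using noclash[OF assms True, of "comp l"] by simp
    next
      case kk then show ?thesis using clause_no_comp[OF cl[OF assms]] by blast
    qed
  qed
  then show ?thesis using fC by (simp add: is_clause_iff f_def True)
qed

lemma f_sat: assumes "K \<in> G" "\<exists>l\<in>K. lit_val \<phi> l" "\<exists>l\<in>C. lit_val \<phi> l"
  shows "\<exists>l\<in>f K. lit_val \<phi> l"
proof (cases "comp x \<in> K")
  case False then show ?thesis using assms by (simp add: f_def)
next
  case True
  show ?thesis
  proof (cases "\<exists>a\<in>A. lit_val \<phi> a")
    case True2: True then show ?thesis using True by (auto simp: f_def)
  next
    case False
    then have "lit_val \<phi> x" using assms(3) by auto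
    from assms(2) obtain l where l: "l \<in> K" "lit_val \<phi> l" by blast
    have "l \<noteq> comp x"
    proof
      assume "l = comp x" with l(2) \<open>lit_val \<phi> x\<close> show False by simp
    qed
    then show ?thesis using True l by (auto simp: f_def)
  qed
qed

lemma DP_MU: "G1 \<in> MU"
proof -
  have G1: "G1 = f ` (G - {C})" by (rule DP_eq)
  have cs1: "finite G1" using fin G1 by simp
  have cs2: "is_clause K'" if "K' \<in> G1" for K'
  proof -
    note kk = that
    obtain K where "K \<in> G" "K' = f K" using kk G1 by auto
    then show ?thesis using f_clause by simp
  qed
  have cs: "is_clause_set G1" unfolding is_clause_set_def using cs1 cs2 by blast
  have uns: "\<not> satisfiable G1"
  proof
    assume "satisfiable G1"
    then obtain \<psi> where ps: "\<forall>K\<in>G - {C}. \<exists>l\<in>f K. lit_val \<psi> l" unfolding G1 satisfiable_def by auto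
    show False
    proof (cases "\<exists>a\<in>A. lit_val \<psi> a")
      case True
      have "\<forall>K\<in>G. comp x \<notin> K \<longrightarrow> (\<exists>l\<in>K. lit_val \<psi> l)"
      proof (intro ballI impI)
        fix K assume "K \<in> G" "comp x \<notin> K"
        show "\<exists>l\<in>K. lit_val \<psi> l"
        proof (cases "K = C")
          case True then show ?thesis using \<open>\<exists>a\<in>A. lit_val \<psi> a\<close> A_C by blast
        next
          case False
          from ps \<open>K \<in> G\<close> False have "\<exists>l\<in>f K. lit_val \<psi> l" by blast
          with \<open>comp x \<notin> K\<close> show ?thesis by (simp add: f_def)
        qed
      qed
      then show False using flip True by blast
    next
      case False
      have "satisfiable G" unfolding satisfiable_def
      proof (intro exI ballI)
        fix K assume KG: "K \<in> G"
        show "\<exists>l\<in>K. lit_val (assign \<psi> x) l"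
        proof (cases "K = C")
          case True then show ?thesis using xC by (auto simp: lit_val_assign intro!: bexI[of _ x])
        next
          case KC: False
          then have xK: "x \<notin> K" using uq KG by blast
          obtain l where l: "l \<in> f K" "lit_val \<psi> l" using ps KG KC by blast
          have "l \<notin> A" using l False by blast
          then have lK: "l \<in> K" "l \<noteq> comp x" using l(1) by (auto simp: f_def split: if_splits)
          then have "var_of l \<noteq> var_of x" using xK var_eq by blast
          then show ?thesis using lK l by (auto simp: lit_val_assign)
        qed
      qed
      then show False using MU by (simp add: MU_def)
    qed
  qed
  have mn: "satisfiable (G1 - {K1})" if "K1 \<in> G1" for K1
  proof -
    note kk = that
    obtain K0 where K0: "K0 \<in> G" "K0 \<noteq> C" "K1 = f K0" using kk G1 by blast
    obtain \<phi> where h: "\<forall>K\<in>G - {K0}. \<exists>l\<in>K. lit_val \<phi> l"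
      using MU_model_minus[OF MU K0(1)] by blast
    have hC: "\<exists>l\<in>C. lit_val \<phi> l" using h CG K0(2) by blast
    show ?thesis unfolding satisfiable_def
    proof (intro exI ballI)
      fix K1' assume "K1' \<in> G1 - {K1}"
      then obtain K where K: "K \<in> G" "K \<noteq> C" "K1' = f K" "f K \<noteq> f K0" using G1 K0 by auto
      then have "K \<noteq> K0" by blast
      then show "\<exists>l\<in>K1'. lit_val \<phi> l" using f_sat[OF K(1) _ hC] h K by blast
    qed
  qed
  have "\<forall>K1\<in>G1. satisfiable (G1 - {K1})" using mn by blast
  then show ?thesis using cs uns by (simp add: MU_def)
qed

lemma card_G1: "card G1 = card G - 1"
proof -
  have "card G1 = card (G - {C})" unfolding DP_eq by (rule card_image[OF f_inj])
  also have "\<dots> = card G - 1" using CG by (simp add: card_Diff_singleton)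
  finally show ?thesis .
qed

lemma card_G1_less: "card G1 < card G"
proof -
  have "card G > 0" using fin CG card_gt_0_iff by blast
  then show ?thesis using card_G1 by simp
qed

lemma novar: "var_of x \<notin> vars G1"
proof
  assume "var_of x \<in> vars G1"
  then obtain K' l where K': "K' \<in> G1" "l \<in> K'" "var_of l = var_of x"
    unfolding vars_def by force
  then obtain K where K: "K \<in> G" "K \<noteq> C" "l \<in> f K" "var_of l = var_of x"
    unfolding DP_eq by blast
  have xK: "x \<notin> K" using uq K by blast
  have "l = x \<or> l = comp x" using var_eq K(4) by blast
  moreover have "l \<noteq> x" using K(3) xK x_notin_A by (auto simp: f_def split: if_splits)
  moreover have "l \<noteq> comp x" using K(3) x_notin_A by (auto simp: f_def split: if_splits)
  ultimately show False by blast
qed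

lemma ldeg_G1: "ldeg G1 z = card {K \<in> G - {C}. z \<in> f K}"
proof -
  have "{K' \<in> G1. z \<in> K'} = f ` {K \<in> G - {C}. z \<in> f K}" unfolding DP_eq by auto
  moreover have "inj_on f {K \<in> G - {C}. z \<in> f K}" by (rule inj_on_subset[OF f_inj]) auto
  ultimately show ?thesis unfolding ldeg_def by (simp add: card_image)
qed

lemma ldeg_same: assumes "z \<notin> C" "z \<noteq> comp x" shows "ldeg G1 z = ldeg G z"
proof -
  have "{K \<in> G - {C}. z \<in> f K} = {K \<in> G. z \<in> K}"
    using assms A_C CG by (auto simp: f_def split: if_splits)
  have "ldeg G1 z = card {K \<in> G - {C}. z \<in> f K}" by (rule ldeg_G1)
  also have "\<dots> = card {K\<in>G. z\<in>K}" using \<open>{K \<in> G - {C}. z \<in> f K} = {K \<in> G. z \<in> K}\<close> by (simp only:)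
  finally show ?thesis by (simp add: ldeg_def)
qed

lemma ldeg_A: assumes "z \<in> A" shows "ldeg G1 z \<ge> ldeg G (comp x)"
proof -
  have "{K \<in> G. comp x \<in> K} \<subseteq> {K \<in> G - {C}. z \<in> f K}"
    using assms cx_notin_C by (auto simp: f_def)
  moreover have "finite {K \<in> G - {C}. z \<in> f K}" using fin by simp
  ultimately have "card {K \<in> G. comp x \<in> K} \<le> card {K \<in> G - {C}. z \<in> f K}" by (rule card_mono[rotated])
  then show ?thesis unfolding ldeg_G1 by (simp add: ldeg_def)
qed

lemma uniq_DP: assumes "y \<notin> C" "var_of y \<noteq> var_of x" "C' \<in> G" "y \<in> C'" "\<And>K. K \<in> G \<Longrightarrow> y \<in> K \<Longrightarrow> K = C'"
  shows "uniq G1 (f C') y"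
proof
  show "G1 \<in> MU" by (rule DP_MU)
  have "C' \<noteq> C" using assms by blast
  then show "f C' \<in> G1" using assms(3) DP_eq by auto
  have yA: "y \<notin> A" "y \<noteq> comp x" using assms(1,2) A_C by auto
  show "y \<in> f C'" using assms(4) yA by (auto simp: f_def)
  fix K' assume "K' \<in> G1" "y \<in> K'"
  then obtain K where "K \<in> G" "K \<noteq> C" "K' = f K" "y \<in> f K" using DP_eq by auto
  then have "y \<in> K" using yA by (auto simp: f_def split: if_splits)
  then show "K' = f C'" using assms(5) \<open>K \<in> G\<close> \<open>K' = f K\<close> by blast
qed


lemma ldeg_x: "ldeg G x = 1"
proof -
  have "{K \<in> G. x \<in> K} = {C}" using uq CG xC by blast
  then show ?thesis by (simp add: ldeg_def)
qed

lemma sing: "singular G (var_of x)"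
  unfolding singular_iff using ldeg_x MU_ldeg_comp[OF MU] by force

end

lemma uniq_of_ldeg: assumes "G \<in> MU" "ldeg G x = 1" obtains C where "uniq G C x"
proof -
  obtain C where "{K\<in>G. x\<in>K} = {C}" using ldeg_one[OF assms(2)] by blast
  then have "C \<in> G" "x \<in> C" "\<And>K. K \<in> G \<Longrightarrow> x \<in> K \<Longrightarrow> K = C" by blast+
  then have "uniq G C x" using assms(1) by (intro uniq.intro) blast+
  then show ?thesis by (rule that)
qed

locale two = U1: uniq G C x + U2: uniq G C' y for G C x C' y +
  assumes vne: "var_of x \<noteq> var_of y" and CC: "C \<noteq> C'"
begin

lemma y_notin_C: "y \<notin> C" using U2.uq U1.CG CC by blast
lemma x_notin_C': "x \<notin> C'" using U1.uq U2.CG CC by blast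

lemma U3: "uniq (DP (var_of x) G) (fA C x C') y"
  using U1.uniq_DP[OF y_notin_C vne[symmetric] U2.CG U2.xC U2.uq] .

lemma img_diff: assumes "inj_on h S" "a \<in> S" shows "h ` S - {h a} = h ` (S - {a})"
  using assms by (auto simp: inj_on_def)

lemma DPDP1: "DP (var_of y) (DP (var_of x) G) = (fA (fA C x C') y \<circ> fA C x) ` (G - {C} - {C'})"
proof -
  interpret U3: uniq "DP (var_of x) G" "fA C x C'" y by (rule U3)
  have "DP (var_of y) (DP (var_of x) G) = U3.f ` (DP (var_of x) G - {fA C x C'})" by (rule U3.DP_eq)
  also have "DP (var_of x) G - {fA C x C'} = fA C x ` (G - {C} - {C'})"
    unfolding U1.DP_eq using img_diff[OF U1.f_inj, of C'] U2.CG CC by blast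
  finally show ?thesis by (simp add: image_comp)
qed



lemma noDC: "\<not> (comp x \<in> C' \<and> comp y \<in> C)"
proof
  assume h: "comp x \<in> C' \<and> comp y \<in> C"
  then have "C \<inter> comp_set C' = {x}" using U1.CK U2.CG by blast
  moreover have "comp y \<in> comp_set C'" using U2.xC unfolding comp_set_def by blast
  ultimately have "comp y = x" using h by blast
  then show False using vne by (metis var_comp)
qed

lemma pointwise: assumes "K \<in> G" "K \<noteq> C" "K \<noteq> C'"
  shows "fA (fA C x C') y (fA C x K) = fA (fA C' y C) x (fA C' y K)"
proof -
  have xK: "x \<notin> K" using U1.uq assms by blast
  have yK: "y \<notin> K" using U2.uq assms by blast
  have f1: "x \<in> C" "y \<in> C'" "comp x \<notin> C" "comp y \<notin> C'" "y \<notin> C" "x \<notin> C'"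
    using U1.xC U2.xC U1.cx_notin_C U2.cx_notin_C y_notin_C x_notin_C' by auto
  have f2: "x \<noteq> y" "x \<noteq> comp y" "y \<noteq> comp x" "comp x \<noteq> comp y"
    using vne by (auto dest: arg_cong[of _ _ var_of])
  have f3: "\<not> (comp x \<in> C' \<and> comp y \<in> C)" by (rule noDC)
  show ?thesis unfolding fA_def
    using xK yK f1 f2 f3
    by (cases "comp x \<in> K"; cases "comp y \<in> K"; cases "comp x \<in> C'"; cases "comp y \<in> C") auto
qed

lemma DPDP1': "DP (var_of y) (DP (var_of x) G) = (\<lambda>K. fA (fA C x C') y (fA C x K)) ` (G - {C} - {C'})"
  using DPDP1 by (simp add: comp_def)

end

lemma two_sym: "two G C x C' y \<Longrightarrow> two G C' y C x"
  unfolding two_def two_axioms_def by auto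

lemma uniq_of_ldeg': assumes "G \<in> MU" "ldeg G x = 1" "C \<in> G" "x \<in> C" shows "uniq G C x"
proof -
  obtain C0 where h: "{K\<in>G. x\<in>K} = {C0}" using ldeg_one[OF assms(2)] by blast
  have "C = C0" using h assms(3,4) by blast
  then have "\<And>K. K \<in> G \<Longrightarrow> x \<in> K \<Longrightarrow> K = C" using h by blast
  then show ?thesis using assms by (intro uniq.intro) blast+
qed

lemma diamond:
  assumes "G \<in> MU" "ldeg G x = 1" "ldeg G y = 1" "var_of x \<noteq> var_of y"
    "C \<in> G" "x \<in> C" "C' \<in> G" "y \<in> C'" "C \<noteq> C'"
  shows "singular (DP (var_of x) G) (var_of y)" "singular (DP (var_of y) G) (var_of x)"
    "DP (var_of y) (DP (var_of x) G) = DP (var_of x) (DP (var_of y) G)"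
proof -
  have u1: "uniq G C x" using uniq_of_ldeg'[OF assms(1,2,5,6)] .
  have u2: "uniq G C' y" using uniq_of_ldeg'[OF assms(1,3,7,8)] .
  have t: "two G C x C' y" using u1 u2 assms(4,9) by (simp add: two_def two_axioms_def)
  have t': "two G C' y C x" using two_sym[OF t] .
  interpret T: two G C x C' y by (rule t)
  interpret T': two G C' y C x by (rule t')
  show "singular (DP (var_of x) G) (var_of y)" using uniq.sing[OF T.U3] .
  show "singular (DP (var_of y) G) (var_of x)" using uniq.sing[OF T'.U3] .
  have "G - {C} - {C'} = G - {C'} - {C}" by blast
  then show "DP (var_of y) (DP (var_of x) G) = DP (var_of x) (DP (var_of y) G)"
    unfolding T.DPDP1' T'.DPDP1' using T.pointwise by (intro image_cong) auto
qed



lemma DPs_Cons: "DPs (v#t) G = DPs t (DP v G)" by (simp add: DPs_def)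
lemma DPs_Nil: "DPs [] G = G" by (simp add: DPs_def)

lemma st_Nil: "singular_tuple G []" by (simp add: singular_tuple_def)

lemma st_Cons: "singular_tuple G (v#t) \<longleftrightarrow> singular G v \<and> singular_tuple (DP v G) t"
proof -
  have "singular_tuple G (v#t) \<longleftrightarrow> (\<forall>i < Suc (length t). singular (DPs (take i (v#t)) G) ((v#t) ! i))"
    by (simp add: singular_tuple_def)
  also have "\<dots> \<longleftrightarrow> singular G v \<and> (\<forall>j < length t. singular (DPs (take (Suc j) (v#t)) G) ((v#t) ! Suc j))"
    by (simp add: All_less_Suc2 DPs_Nil)
  also have "\<dots> \<longleftrightarrow> singular G v \<and> singular_tuple (DP v G) t"
    by (simp add: singular_tuple_def DPs_Cons)
  finally show ?thesis .
qed

lemma mst_Nil: "maximal_singular_tuple G [] \<longleftrightarrow> nonsingular G"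
  by (simp add: maximal_singular_tuple_def st_Nil DPs_Nil)

lemma mst_Cons: "maximal_singular_tuple G (v#t) \<longleftrightarrow> singular G v \<and> maximal_singular_tuple (DP v G) t"
  by (auto simp: maximal_singular_tuple_def st_Cons DPs_Cons)

lemma sing_DP: assumes "G \<in> MU" "singular G v" shows "DP v G \<in> MU" "card (DP v G) < card G"
proof -
  obtain z where z: "var_of z = v" "ldeg G z = 1" using assms(2) unfolding singular_iff by blast
  obtain C where u: "uniq G C z" using uniq_of_ldeg[OF assms(1) z(2)] by blast
  show "DP v G \<in> MU" using uniq.DP_MU[OF u] z(1) by simp
  show "card (DP v G) < card G" using uniq.card_G1_less[OF u] z(1) by simp
qed

lemma exists_mst: "G \<in> MU \<Longrightarrow> \<exists>vs. maximal_singular_tuple G vs"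
proof (induction "card G" arbitrary: G rule: less_induct)
  case less
  show ?case
  proof (cases "nonsingular G")
    case True
    then have "maximal_singular_tuple G []" by (simp add: mst_Nil)
    then show ?thesis by blast
  next
    case False
    then obtain v where v: "singular G v" by (auto simp: nonsingular_def)
    have "DP v G \<in> MU" "card (DP v G) < card G" using sing_DP[OF less.prems v] by auto
    then obtain t where t: "maximal_singular_tuple (DP v G) t" using less.hyps by blast
    have "maximal_singular_tuple G (v#t)" using v t by (simp add: mst_Cons)
    then show ?thesis by blast
  qed
qed

lemma caseII_aux:
  assumes u1: "uniq G C x" and u2: "uniq G C y" and vne: "var_of x \<noteq> var_of y"
    and d1: "ldeg G (comp x) \<ge> 2" and d2: "ldeg G (comp y) \<ge> 2"
    and s: "singular (DP (var_of x) G) u"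
  shows "\<exists>z. var_of z = u \<and> ldeg G z = 1 \<and> z \<notin> C \<and> var_of z \<noteq> var_of x \<and> var_of z \<noteq> var_of y"
proof -
  interpret U: uniq G C x by (rule u1)
  obtain z where z: "var_of z = u" "ldeg (DP (var_of x) G) z = 1" using s unfolding singular_iff by blast
  have fin1: "finite (DP (var_of x) G)" using U.DP_MU by (rule MU_finite)
  have "\<exists>K \<in> DP (var_of x) G. z \<in> K" using z(2) ldeg_ge1[OF fin1, of z] by simp
  then have "var_of z \<in> vars (DP (var_of x) G)" unfolding vars_def by blast
  then have zx: "var_of z \<noteq> var_of x" using U.novar by metis
  then have zcx: "z \<noteq> comp x" "z \<noteq> x" by auto
  have zC: "z \<notin> C"
  proof
    assume "z \<in> C"
    then have "z \<in> U.A" using zcx by blast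
    then have "ldeg (DP (var_of x) G) z \<ge> ldeg G (comp x)" by (rule U.ldeg_A)
    then show False using z(2) d1 by simp
  qed
  have lz: "ldeg G z = 1" using U.ldeg_same[OF zC zcx(1)] z(2) by simp
  have "var_of z \<noteq> var_of y"
  proof
    assume "var_of z = var_of y"
    then have "z = y \<or> z = comp y" using var_eq by blast
    moreover have "z \<noteq> y" using zC uniq.xC[OF u2] by blast
    ultimately show False using lz d2 by auto
  qed
  then show ?thesis using z(1) lz zC zx by blast
qed



lemma caseII_step:
  fixes G :: "'v cls"
  assumes IH: "\<And>(H::'v cls) a b. card H < card G \<Longrightarrow> H \<in> MU \<Longrightarrow> maximal_singular_tuple H a \<Longrightarrow> maximal_singular_tuple H b \<Longrightarrow> length a = length b"
    and MU: "G \<in> MU" and u1: "uniq G C x" and u2: "uniq G C y" and vne: "var_of x \<noteq> var_of y"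
    and d1: "ldeg G (comp x) \<ge> 2" and d2: "ldeg G (comp y) \<ge> 2"
    and m1: "maximal_singular_tuple (DP (var_of x) G) t1" and m2: "maximal_singular_tuple (DP (var_of y) G) t2"
    and ne: "t1 \<noteq> []"
  shows "length t1 = length t2"
proof -
  obtain u s1 where t1: "t1 = u # s1" using ne by (cases t1) auto
  have su: "singular (DP (var_of x) G) u" using m1 t1 by (simp add: mst_Cons)
  obtain z where z: "var_of z = u" "ldeg G z = 1" "z \<notin> C" "var_of z \<noteq> var_of x" "var_of z \<noteq> var_of y"
    using caseII_aux[OF u1 u2 vne d1 d2 su] by blast
  obtain Kz where uz: "uniq G Kz z" using uniq_of_ldeg[OF MU z(2)] by blast
  have KzC: "Kz \<noteq> C" using uniq.xC[OF uz] z(3) by blast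
  have lx: "ldeg G x = 1" using uniq.ldeg_x[OF u1] .
  have ly: "ldeg G y = 1" using uniq.ldeg_x[OF u2] .
  note dzx = diamond[OF MU z(2) lx z(4) uniq.CG[OF uz] uniq.xC[OF uz] uniq.CG[OF u1] uniq.xC[OF u1] KzC]
  note dzy = diamond[OF MU z(2) ly z(5) uniq.CG[OF uz] uniq.xC[OF uz] uniq.CG[OF u2] uniq.xC[OF u2] KzC]
  have sG: "singular G u" using uniq.sing[OF uz] z(1) by simp
  have G'MU: "DP u G \<in> MU" and G'c: "card (DP u G) < card G" using sing_DP[OF MU sG] by auto
  have G1MU: "DP (var_of x) G \<in> MU" "card (DP (var_of x) G) < card G" using sing_DP[OF MU uniq.sing[OF u1]] by auto
  have G2MU: "DP (var_of y) G \<in> MU" "card (DP (var_of y) G) < card G" using sing_DP[OF MU uniq.sing[OF u2]] by auto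
  have H1MU: "DP u (DP (var_of x) G) \<in> MU" using sing_DP[OF G1MU(1) su] by auto
  obtain t where t: "maximal_singular_tuple (DP u (DP (var_of x) G)) t" using exists_mst[OF H1MU] by blast
  have mt: "maximal_singular_tuple (DP (var_of x) G) (u#t)" using su t by (simp add: mst_Cons)
  have e1: "length t1 = length (u#t)" by (rule IH[OF G1MU(2) G1MU(1) m1 mt])
  have su2: "singular (DP (var_of y) G) u" using dzy(2) z(1) by simp
  have H2MU: "DP u (DP (var_of y) G) \<in> MU" using sing_DP[OF G2MU(1) su2] by auto
  obtain t' where t': "maximal_singular_tuple (DP u (DP (var_of y) G)) t'" using exists_mst[OF H2MU] by blast
  have mt': "maximal_singular_tuple (DP (var_of y) G) (u#t')" using su2 t' by (simp add: mst_Cons)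
  have e2: "length t2 = length (u#t')" by (rule IH[OF G2MU(2) G2MU(1) m2 mt'])
  have mv: "maximal_singular_tuple (DP u G) (var_of x # t)"
    using dzx(1) dzx(3) t z(1) by (simp add: mst_Cons)
  have mw: "maximal_singular_tuple (DP u G) (var_of y # t')"
    using dzy(1) dzy(3) t' z(1) by (simp add: mst_Cons)
  have "length (var_of x # t) = length (var_of y # t')" by (rule IH[OF G'c G'MU mv mw])
  then show ?thesis using e1 e2 by simp
qed

lemma main:
  fixes G :: "'v cls"
  shows "G \<in> MU \<Longrightarrow> maximal_singular_tuple G vs1 \<Longrightarrow> maximal_singular_tuple G vs2 \<Longrightarrow> length vs1 = length vs2"
proof (induction "card G" arbitrary: G vs1 vs2 rule: less_induct)
  case less
  have IH: "\<And>(H::'v cls) a b. card H < card G \<Longrightarrow> H \<in> MU \<Longrightarrow> maximal_singular_tuple H a \<Longrightarrow> maximal_singular_tuple H b \<Longrightarrow> length a = length b"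
    using less.hyps by blast
  have MU: "G \<in> MU" by (rule less.prems(1))
  show ?case
  proof (cases vs1)
    case Nil
    then have ns: "nonsingular G" using less.prems(2) by (simp add: mst_Nil)
    show ?thesis
    proof (cases vs2)
      case Nil then show ?thesis using \<open>vs1 = []\<close> by simp
    next
      case (Cons w t2) then have "singular G w" using less.prems(3) by (simp add: mst_Cons)
      then show ?thesis using ns by (simp add: nonsingular_def)
    qed
  next
    case (Cons v t1)
    have sv: "singular G v" and m1: "maximal_singular_tuple (DP v G) t1"
      using less.prems(2) Cons by (simp_all add: mst_Cons)
    show ?thesis
    proof (cases vs2)
      case Nil
      then have ns: "nonsingular G" using less.prems(3) by (simp add: mst_Nil)
      then show ?thesis using sv by (simp add: nonsingular_def)
    next
      case (Cons w t2)
      have sw: "singular G w" and m2: "maximal_singular_tuple (DP w G) t2"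
        using less.prems(3) Cons by (simp_all add: mst_Cons)
      have v1: "DP v G \<in> MU" "card (DP v G) < card G" using sing_DP[OF MU sv] by auto
      have w1: "DP w G \<in> MU" "card (DP w G) < card G" using sing_DP[OF MU sw] by auto
      show ?thesis
      proof (cases "v = w")
        case True
        then have "length t1 = length t2" using IH[OF v1(2) v1(1) m1] m2 by simp
        then show ?thesis using \<open>vs1 = v # t1\<close> \<open>vs2 = w # t2\<close> by simp
      next
        case vw: False
        obtain x where x: "var_of x = v" "ldeg G x = 1" using sv unfolding singular_iff by blast
        obtain y where y: "var_of y = w" "ldeg G y = 1" using sw unfolding singular_iff by blast
        obtain C where u1: "uniq G C x" using uniq_of_ldeg[OF MU x(2)] by blast
        obtain C' where u2: "uniq G C' y" using uniq_of_ldeg[OF MU y(2)] by blast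
        have vne: "var_of x \<noteq> var_of y" using x y vw by simp
        show ?thesis
        proof (cases "\<exists>x' y' C1 C2. var_of x' = v \<and> var_of y' = w \<and> ldeg G x' = 1 \<and> ldeg G y' = 1
                     \<and> C1 \<in> G \<and> x' \<in> C1 \<and> C2 \<in> G \<and> y' \<in> C2 \<and> C1 \<noteq> C2")
          case True
          then obtain x' y' C1 C2 where h: "var_of x' = v" "var_of y' = w" "ldeg G x' = 1" "ldeg G y' = 1"
            "C1 \<in> G" "x' \<in> C1" "C2 \<in> G" "y' \<in> C2" "C1 \<noteq> C2" by blast
          have vne': "var_of x' \<noteq> var_of y'" using h(1,2) vw by simp
          note dd = diamond[OF MU h(3,4) vne' h(5-9)]
          have s1: "singular (DP v G) w" and s2: "singular (DP w G) v"
            and eq: "DP w (DP v G) = DP v (DP w G)" using dd h(1,2) by simp_all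
          have HMU: "DP w (DP v G) \<in> MU" using sing_DP[OF v1(1) s1] by auto
          obtain t where t: "maximal_singular_tuple (DP w (DP v G)) t" using exists_mst[OF HMU] by blast
          have mt1: "maximal_singular_tuple (DP v G) (w#t)" using s1 t by (simp add: mst_Cons)
          have mt2: "maximal_singular_tuple (DP w G) (v#t)" using s2 t eq by (simp add: mst_Cons)
          have "length t1 = length (w#t)" by (rule IH[OF v1(2) v1(1) m1 mt1])
          moreover have "length t2 = length (v#t)" by (rule IH[OF w1(2) w1(1) m2 mt2])
          ultimately show ?thesis using \<open>vs1 = v # t1\<close> \<open>vs2 = w # t2\<close> by simp
        next
          case noP: False
          have CC: "C = C'"
          proof (rule ccontr)
            assume "C \<noteq> C'"
            then show False using noP x y uniq.CG[OF u1] uniq.xC[OF u1] uniq.CG[OF u2] uniq.xC[OF u2] by blast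
          qed
          have u2': "uniq G C y" using u2 CC by simp
          have d1: "ldeg G (comp x) \<ge> 2"
          proof -
            have "ldeg G (comp x) \<ge> 1" using MU_ldeg_comp[OF MU] x(2) by simp
            moreover have "ldeg G (comp x) \<noteq> 1"
            proof
              assume l1: "ldeg G (comp x) = 1"
              obtain C'' where u3: "uniq G C'' (comp x)" using uniq_of_ldeg[OF MU l1] by blast
              have "C'' \<noteq> C'" using uniq.xC[OF u3] uniq.cx_notin_C[OF u1] CC by blast
              then show False using noP x y l1 uniq.CG[OF u3] uniq.xC[OF u3] uniq.CG[OF u2] uniq.xC[OF u2]
                by (metis var_comp)
            qed
            ultimately show ?thesis by simp
          qed
          have d2: "ldeg G (comp y) \<ge> 2"
          proof -
            have "ldeg G (comp y) \<ge> 1" using MU_ldeg_comp[OF MU] y(2) by simp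
            moreover have "ldeg G (comp y) \<noteq> 1"
            proof
              assume l1: "ldeg G (comp y) = 1"
              obtain C'' where u3: "uniq G C'' (comp y)" using uniq_of_ldeg[OF MU l1] by blast
              have "C'' \<noteq> C" using uniq.xC[OF u3] uniq.cx_notin_C[OF u2'] by blast
              then show False using noP x y l1 uniq.CG[OF u3] uniq.xC[OF u3] uniq.CG[OF u1] uniq.xC[OF u1]
                by (metis var_comp)
            qed
            ultimately show ?thesis by simp
          qed
          have m1': "maximal_singular_tuple (DP (var_of x) G) t1" using m1 x(1) by simp
          have m2': "maximal_singular_tuple (DP (var_of y) G) t2" using m2 y(1) by simp
          have "length t1 = length t2"
          proof (cases "t1 = []")
            case False
            show ?thesis by (rule caseII_step[OF IH MU u1 u2' vne d1 d2 m1' m2' False])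
          next
            case t1n: True
            show ?thesis
            proof (cases "t2 = []")
              case True then show ?thesis using t1n by simp
            next
              case False
              have "length t2 = length t1"
                by (rule caseII_step[OF IH MU u2' u1 vne[symmetric] d2 d1 m2' m1' False])
              then show ?thesis by simp
            qed
          qed
          then show ?thesis using \<open>vs1 = v # t1\<close> \<open>vs2 = w # t2\<close> by simp
        qed
      qed
    qed
  qed
qed

theorem theorem63:
  fixes F :: "'v cls" and vs :: "'v list"
  assumes "F \<in> MU"
    and "maximal_singular_tuple F vs"
  shows "length vs = singind F"
proof -
  have "(LEAST n. \<exists>vs. maximal_singular_tuple F vs \<and> length vs = n) = length vs"
  proof (rule Least_equality)
    show "\<exists>vs'. maximal_singular_tuple F vs' \<and> length vs' = length vs" using assms(2) by blast
  next
    fix m assume "\<exists>vs'. maximal_singular_tuple F vs' \<and> length vs' = m"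
    then obtain vs' where "maximal_singular_tuple F vs'" "length vs' = m" by blast
    then show "length vs \<le> m" using main[OF assms(1) assms(2)] by simp
  qed
  then show ?thesis by (simp add: singind_def)
qed


end
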